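(* Let $y,\tilde{y},l,\tilde{l},u,\tilde{u}\in\mathcal{R}(\mathbb{R}^{+},\mathbb{R})$ with $l\leq u$, $\tilde l\leq\tilde u$, $l_0\leq y_0\leq u_0$, $\tilde l_0\leq\tilde y_0\leq\tilde u_0$, and $\inf_{s\leq t}(u_s-l_s)>0$, $\inf_{s\leq t}(\tilde u_s-\tilde l_s)>0$ for all $t\geq0$. Let $(x,k)$ and $(\tilde{x},\tilde{k})$ be the solutions of $RP^u_l(y)$ and $RP^{\tilde{u}}_{\tilde{l}}(\tilde{y})$ respectively. Let $T>0$ and $\|f\|_{<T}=\sup_{0\leq s<T}|f_s|$. Then $$\|k-\tilde{k}\|_{<T}\leq 2\big(\|y-\tilde{y}\|_{<T}+\|l-\tilde{l}\|_{<T}+\|u-\tilde{u}\|_{<T}\big),$$ $$\|x-\tilde{x}\|_{<T}\leq 3\big(\|y-\tilde{y}\|_{<T}+\|l-\tilde{l}\|_{<T}+\|u-\tilde{u}\|_{<T}\big).$$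
   Context: A function $f:\mathbb{R}^+=[0,\infty)\to\mathbb{R}$ is regulated if it has a left limit $f_{t^-}$ at every $t>0$ and a right limit $f_{t^+}$ at every $t\geq0$; $\mathcal{R}(\mathbb{R}^{+},\mathbb{R})$ is the set of regulated functions. Write $\Delta^+f_t=f_{t^+}-f_t$, $a\wedge b=\min(a,b)$, $a\vee b=\max(a,b)$. For a function $\phi$ of bounded variation, $\phi^r_t=\phi^c_t+\sum_{0<s\leq t}(\phi_s-\phi_{s^-})$ is its right-continuous part ($\phi^c$ the continuous part). Two-barrier problem $RP^u_l(y)$ (with $l_0\leq y_0\leq u_0$): $(x,k)$ regulated is a solution if there are $\phi^1,\phi^2$ with (i) $x=y+k$, $k=\phi^1-\phi^2$; (ii) $l\leq x\leq u$; (iii) $\phi^1,\phi^2$ non-decreasing, $\phi^1_0=\phi^2_0=0$; (iv) $\int_{[0,\infty[}\big((x_s-l_s)\wedge(x_{s^+}-l_{s^+})\big)d\phi^{1,r}_s=\int_{[0,\infty[}\big((u_s-x_s)\wedge(u_{s^+}-x_{s^+})\big)d\phi^{2,r}_s=0$; (v) for all $t$, $\sum_{s\leq t}(x_{s^+}-l_{s^+})\Delta^+\phi^1_s=\sum_{s\leq t}(u_s-x_s)\Delta^+\phi^1_s=0$ and $\sum_{s\leq t}(u_{s^+}-x_{s^+})\Delta^+\phi^2_s=\sum_{s\leq t}(x_s-l_s)\Delta^+\phi^2_s=0$. Under the stated hypotheses the solution exists and is unique. *)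

theory Defs
  imports "HOL-Analysis.Analysis"
begin

text \<open>Functions on R+ = [0,oo) are modelled as real => real; values at negative
  arguments are irrelevant.\<close>

definition regulated :: "(real \<Rightarrow> real) \<Rightarrow> bool" where
  "regulated f \<longleftrightarrow>
     (\<forall>t>0. \<exists>L. (f \<longlongrightarrow> L) (at_left t)) \<and>
     (\<forall>t\<ge>0. \<exists>R. (f \<longlongrightarrow> R) (at_right t))"

definition lft :: "(real \<Rightarrow> real) \<Rightarrow> real \<Rightarrow> real" where
  "lft f t = Lim (at_left t) f"

definition rgt :: "(real \<Rightarrow> real) \<Rightarrow> real \<Rightarrow> real" where
  "rgt f t = Lim (at_right t) f"

definition djump :: "(real \<Rightarrow> real) \<Rightarrow> real \<Rightarrow> real" where
  "djump f t = rgt f t - f t"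

definition cont_part :: "(real \<Rightarrow> real) \<Rightarrow> real \<Rightarrow> real" where
  "cont_part \<phi> t =
     \<phi> t - (\<Sum>\<^sub>\<infinity>s\<in>{0<..t}. \<phi> s - lft \<phi> s) - (\<Sum>\<^sub>\<infinity>s\<in>{0..<t}. djump \<phi> s)"

text \<open>Right-continuous part phi^r_t = phi^c_t + sum_{0<s<=t} (phi_s - phi_{s-}),
  extended by 0 to negative times (so that it defines a measure on the line).\<close>
definition rc_part :: "(real \<Rightarrow> real) \<Rightarrow> real \<Rightarrow> real" where
  "rc_part \<phi> t =
     (if t < 0 then 0 else cont_part \<phi> t + (\<Sum>\<^sub>\<infinity>s\<in>{0<..t}. \<phi> s - lft \<phi> s))"

definition is_RP_solution ::
  "(real \<Rightarrow> real) \<Rightarrow> (real \<Rightarrow> real) \<Rightarrow> (real \<Rightarrow> real) \<Rightarrow> (real \<Rightarrow> real) \<Rightarrow> (real \<Rightarrow> real) \<Rightarrow> bool"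
where
  "is_RP_solution l u y x k \<longleftrightarrow>
     regulated x \<and> regulated k \<and>
     (\<exists>\<phi>1 \<phi>2.
        (\<forall>t\<ge>0. x t = y t + k t) \<and> (\<forall>t\<ge>0. k t = \<phi>1 t - \<phi>2 t) \<and>
        (\<forall>t\<ge>0. l t \<le> x t \<and> x t \<le> u t) \<and>
        mono_on {0..} \<phi>1 \<and> mono_on {0..} \<phi>2 \<and> \<phi>1 0 = 0 \<and> \<phi>2 0 = 0 \<and>
        (\<integral>\<^sup>+ s\<in>{0..}. ennreal (min (x s - l s) (rgt x s - rgt l s))
            \<partial>interval_measure (rc_part \<phi>1)) = 0 \<and>
        (\<integral>\<^sup>+ s\<in>{0..}. ennreal (min (u s - x s) (rgt u s - rgt x s))
            \<partial>interval_measure (rc_part \<phi>2)) = 0 \<and>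
        (\<forall>t\<ge>0.
           ((\<lambda>s. (rgt x s - rgt l s) * djump \<phi>1 s) has_sum 0) {0..t} \<and>
           ((\<lambda>s. (u s - x s) * djump \<phi>1 s) has_sum 0) {0..t} \<and>
           ((\<lambda>s. (rgt u s - rgt x s) * djump \<phi>2 s) has_sum 0) {0..t} \<and>
           ((\<lambda>s. (x s - l s) * djump \<phi>2 s) has_sum 0) {0..t}))"

definition supnorm_lt :: "real \<Rightarrow> (real \<Rightarrow> real) \<Rightarrow> real" where
  "supnorm_lt T f = (SUP s\<in>{0..<T}. \<bar>f s\<bar>)"

end

theory Submission
  imports Defs
begin

lemma reg_rgt:
  assumes "regulated f" "t \<ge> 0"
  shows "(f \<longlongrightarrow> rgt f t) (at_right t)"
proof -
  obtain R where R: "(f \<longlongrightarrow> R) (at_right t)" using assms unfolding regulated_def by blast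
  then have "rgt f t = R" unfolding rgt_def by (intro tendsto_Lim) auto
  then show ?thesis using R by simp
qed

lemma mono_right_lim_ex:
  fixes \<phi> :: "real \<Rightarrow> real"
  assumes mono: "mono_on {0..} \<phi>" and s: "s \<ge> 0"
  shows "\<exists>R. (\<phi> \<longlongrightarrow> R) (at_right s)"
proof -
  let ?A = "\<phi> ` {s<..<s+1}"
  define L where "L = Inf ?A"
  have bdd: "bdd_below ?A"
    using mono s unfolding bdd_below_def mono_on_def by (intro exI[of _ "\<phi> s"]) auto
  have ne: "?A \<noteq> {}" by auto
  have "(\<phi> \<longlongrightarrow> L) (at_right s)"
  proof (rule order_tendstoI)
    fix a assume "a < L"
    have "\<forall>z\<in>{s<..<s+1}. a < \<phi> z"
      using cInf_lower[OF _ bdd] \<open>a < L\<close> unfolding L_def by fastforce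
    then show "eventually (\<lambda>z. a < \<phi> z) (at_right s)"
      by (intro eventually_at_rightI[of s "s+1"]) auto
  next
    fix a assume "L < a"
    then obtain r where r: "r \<in> {s<..<s+1}" "\<phi> r < a"
      using cInf_lessD[OF ne, of a] unfolding L_def by auto
    have "\<forall>z\<in>{s<..<r}. \<phi> z < a"
    proof
      fix z assume "z \<in> {s<..<r}"
      then have "\<phi> z \<le> \<phi> r" using mono s r unfolding mono_on_def by auto
      then show "\<phi> z < a" using r by auto
    qed
    then show "eventually (\<lambda>z. \<phi> z < a) (at_right s)"
      using r by (intro eventually_at_rightI[of s r]) auto
  qed
  then show ?thesis by blast
qed

lemma mono_rgt:
  fixes \<phi> :: "real \<Rightarrow> real"
  assumes mono: "mono_on {0..} \<phi>" and s: "s \<ge> 0"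
  shows "(\<phi> \<longlongrightarrow> rgt \<phi> s) (at_right s)" "\<phi> s \<le> rgt \<phi> s" "\<And>r. r > s \<Longrightarrow> rgt \<phi> s \<le> \<phi> r"
proof -
  obtain R where R: "(\<phi> \<longlongrightarrow> R) (at_right s)" using mono_right_lim_ex[OF assms] by blast
  then have "rgt \<phi> s = R" unfolding rgt_def by (intro tendsto_Lim) auto
  then show lim: "(\<phi> \<longlongrightarrow> rgt \<phi> s) (at_right s)" using R by simp
  show "\<phi> s \<le> rgt \<phi> s"
  proof (rule tendsto_lowerbound[OF lim])
    show "\<forall>\<^sub>F x in at_right s. \<phi> s \<le> \<phi> x"
      using mono s unfolding mono_on_def
      by (intro eventually_at_rightI[of s "s+1"]) auto
  qed simp
  fix r assume "r > s"
  show "rgt \<phi> s \<le> \<phi> r"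
  proof (rule tendsto_upperbound[OF lim])
    show "\<forall>\<^sub>F x in at_right s. \<phi> x \<le> \<phi> r"
      using mono s \<open>r > s\<close> unfolding mono_on_def
      by (intro eventually_at_rightI[of s r]) auto
  qed simp
qed

lemma djump_nonneg:
  assumes "mono_on {0..} \<phi>" "s \<ge> 0"
  shows "djump \<phi> s \<ge> 0"
  using mono_rgt(2)[OF assms] unfolding djump_def by simp

lemma djump_finite_sum:
  fixes \<phi> :: "real \<Rightarrow> real"
  assumes mono: "mono_on {0..} \<phi>" and a: "0 \<le> a" "a \<le> b"
    and G: "finite G" "G \<subseteq> {a..<b}"
  shows "sum (djump \<phi>) G \<le> \<phi> b - \<phi> a"
  using G a(2)
proof (induction "card G" arbitrary: G b rule: less_induct)
  case less
  show ?case
  proof (cases "G = {}")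
    case True
    then show ?thesis using mono a less.prems unfolding mono_on_def by auto
  next
    case False
    define m where "m = Max G"
    have mG: "m \<in> G" using False less.prems m_def by auto
    have m: "a \<le> m" "m < b" using mG less.prems by auto
    have sub: "G - {m} \<subseteq> {a..<m}"
    proof
      fix z assume z: "z \<in> G - {m}"
      then have "z \<le> m" using less.prems m_def by auto
      then show "z \<in> {a..<m}" using z less.prems by fastforce
    qed
    have "card (G - {m}) < card G" by (rule card_Diff1_less[OF less.prems(1) mG])
    then have IH: "sum (djump \<phi>) (G - {m}) \<le> \<phi> m - \<phi> a"
      using less.hyps[of "G - {m}" m] sub less.prems m by auto
    have "djump \<phi> m \<le> \<phi> b - \<phi> m"
      using mono_rgt(3)[OF mono _ m(2)] m a unfolding djump_def by auto
    moreover have "sum (djump \<phi>) G = djump \<phi> m + sum (djump \<phi>) (G - {m})"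
      using mG less.prems by (simp add: sum.remove)
    ultimately show ?thesis using IH by linarith
  qed
qed

lemma djump_summable:
  fixes \<phi> :: "real \<Rightarrow> real"
  assumes mono: "mono_on {0..} \<phi>" and a: "0 \<le> a"
  shows "djump \<phi> summable_on {a..<b}"
proof (cases "a \<le> b")
  case True
  show ?thesis
  proof (rule nonneg_bdd_above_summable_on)
    show "\<And>x. x \<in> {a..<b} \<Longrightarrow> 0 \<le> djump \<phi> x" using djump_nonneg[OF mono] a by auto
    show "bdd_above (sum (djump \<phi>) ` {F. F \<subseteq> {a..<b} \<and> finite F})"
      using djump_finite_sum[OF mono a True] unfolding bdd_above_def by blast
  qed
next
  case False
  then show ?thesis by simp
qed

lemma djump_infsum_le:
  fixes \<phi> :: "real \<Rightarrow> real"
  assumes mono: "mono_on {0..} \<phi>" and a: "0 \<le> a" "a \<le> b"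
  shows "infsum (djump \<phi>) {a..<b} \<le> \<phi> b - \<phi> a"
  by (rule infsum_le_finite_sums[OF djump_summable[OF mono a(1)]])
     (use djump_finite_sum[OF mono a] in auto)

lemma djump_infsum_nonneg:
  fixes \<phi> :: "real \<Rightarrow> real"
  assumes mono: "mono_on {0..} \<phi>" and a: "0 \<le> a"
  shows "infsum (djump \<phi>) {a..<b} \<ge> 0"
  by (rule infsum_nonneg) (use djump_nonneg[OF mono] a in auto)

lemma rc_part_eq:
  "t \<ge> 0 \<Longrightarrow> rc_part \<phi> t = \<phi> t - infsum (djump \<phi>) {0..<t}"
  unfolding rc_part_def cont_part_def by simp

lemma rc_part_diff:
  fixes \<phi> :: "real \<Rightarrow> real"
  assumes mono: "mono_on {0..} \<phi>" and a: "0 \<le> a" "a \<le> b"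
  shows "rc_part \<phi> b - rc_part \<phi> a = \<phi> b - \<phi> a - infsum (djump \<phi>) {a..<b}"
proof -
  have "{0..<b} = {0..<a} \<union> {a..<b}" using a by auto
  then have "infsum (djump \<phi>) {0..<b} = infsum (djump \<phi>) {0..<a} + infsum (djump \<phi>) {a..<b}"
    using infsum_Un_disjoint[OF djump_summable[OF mono, of 0 a] djump_summable[OF mono a(1), of b]]
    by auto
  then show ?thesis using rc_part_eq[of a \<phi>] rc_part_eq[of b \<phi>] a by simp
qed

lemma rc_part_mono:
  fixes \<phi> :: "real \<Rightarrow> real"
  assumes mono: "mono_on {0..} \<phi>" and z: "\<phi> 0 = 0" and xy: "x \<le> y"
  shows "rc_part \<phi> x \<le> rc_part \<phi> y"
proof (cases "y < 0")
  case True
  then show ?thesis using xy unfolding rc_part_def by simp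
next
  case False
  show ?thesis
  proof (cases "x < 0")
    case True
    then have "rc_part \<phi> x = 0" unfolding rc_part_def by simp
    moreover have "rc_part \<phi> y - rc_part \<phi> 0 \<ge> 0"
      using rc_part_diff[OF mono, of 0 y] djump_infsum_le[OF mono, of 0 y] False by simp
    moreover have "rc_part \<phi> 0 = 0" using rc_part_eq[of 0 \<phi>] z by simp
    ultimately show ?thesis by simp
  next
    case False
    then show ?thesis
      using rc_part_diff[OF mono, of x y] djump_infsum_le[OF mono, of x y] xy by simp
  qed
qed

lemma rc_part_right_cont:
  fixes \<phi> :: "real \<Rightarrow> real"
  assumes mono: "mono_on {0..} \<phi>" and z: "\<phi> 0 = 0"
  shows "continuous (at_right a) (rc_part \<phi>)"
proof (cases "a < 0")
  case True
  have "eventually (\<lambda>x. rc_part \<phi> x = rc_part \<phi> a) (at_right a)"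
    using True unfolding rc_part_def by (intro eventually_at_rightI[of a 0]) auto
  then have "(rc_part \<phi> \<longlongrightarrow> rc_part \<phi> a) (at_right a)"
    by (simp add: tendsto_eventually)
  then show ?thesis unfolding continuous_within
    by (simp add: Lim_ident_at)
next
  case False
  let ?F = "rc_part \<phi>"
  have "(?F \<longlongrightarrow> ?F a) (at_right a)"
  proof (rule tendsto_sandwich)
    show "eventually (\<lambda>x. ?F a \<le> ?F x) (at_right a)"
      using rc_part_mono[OF mono z] by (intro eventually_at_rightI[of a "a+1"]) auto
    show "eventually (\<lambda>x. ?F x \<le> ?F a + (\<phi> x - rgt \<phi> a)) (at_right a)"
    proof (intro eventually_at_rightI[of a "a+1"])
      fix x assume x: "x \<in> {a<..<a+1}"
      have "djump \<phi> a \<le> infsum (djump \<phi>) {a..<x}"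
      proof -
        have "infsum (djump \<phi>) {a} \<le> infsum (djump \<phi>) {a..<x}"
          by (rule infsum_mono_neutral)
             (use x False djump_summable[OF mono, of a x] djump_nonneg[OF mono] in auto)
        then show ?thesis by simp
      qed
      then show "?F x \<le> ?F a + (\<phi> x - rgt \<phi> a)"
        using rc_part_diff[OF mono, of a x] x False unfolding djump_def by auto
    qed simp
    show "((\<lambda>x. ?F a) \<longlongrightarrow> ?F a) (at_right a)" by simp
    have "((\<lambda>x. ?F a + (\<phi> x - rgt \<phi> a)) \<longlongrightarrow> ?F a + (rgt \<phi> a - rgt \<phi> a)) (at_right a)"
      using mono_rgt(1)[OF mono] False by (intro tendsto_intros) auto
    then show "((\<lambda>x. ?F a + (\<phi> x - rgt \<phi> a)) \<longlongrightarrow> ?F a) (at_right a)" by simp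
  qed
  then show ?thesis unfolding continuous_within
    by (simp add: Lim_ident_at)
qed

lemma rc_measure_Ioc:
  fixes \<phi> :: "real \<Rightarrow> real"
  assumes mono: "mono_on {0..} \<phi>" and z: "\<phi> 0 = 0" and a: "0 \<le> a" "a \<le> b"
  shows "emeasure (interval_measure (rc_part \<phi>)) {a<..b}
           = ennreal (\<phi> b - \<phi> a - infsum (djump \<phi>) {a..<b})"
  using emeasure_interval_measure_Ioc[OF a(2), of "rc_part \<phi>"] rc_part_mono[OF mono z]
    rc_part_right_cont[OF mono z] rc_part_diff[OF mono a] by auto

lemma threshold:
  fixes \<phi> :: "real \<Rightarrow> real"
  assumes mono: "mono_on {0..} \<phi>" and z: "\<phi> 0 = 0" and tau: "\<tau> > 0" and eta: "\<eta> > 0"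
  shows "\<exists>b. 0 \<le> b \<and> b < \<tau> \<and> (\<forall>a. b < a \<longrightarrow> a \<le> \<tau> \<longrightarrow>
           emeasure (interval_measure (rc_part \<phi>)) {a<..<\<tau>} < ennreal \<eta> \<and>
           infsum (djump \<phi>) {a..<\<tau>} < \<eta>)"
proof -
  let ?M = "interval_measure (rc_part \<phi>)"
  define A where "A n = {\<tau> - 1 / real (Suc n) <..< \<tau>}" for n
  have rng: "range A \<subseteq> sets ?M" unfolding A_def by auto
  have dec: "decseq A"
  proof (rule decseq_SucI)
    fix n
    have "1 / real (Suc (Suc n)) \<le> 1 / real (Suc n)" by (simp add: frac_le)
    then show "A (Suc n) \<subseteq> A n" unfolding A_def by auto
  qed
  have fin: "emeasure ?M (A n) \<noteq> \<infinity>" for n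
  proof -
    have h: "1 / (1 + real n) \<le> 1" by simp
    have "A n \<subseteq> {\<tau> - 1<..\<tau>}"
    proof
      fix x assume "x \<in> A n"
      then have "\<tau> - 1 / (1 + real n) < x" "x < \<tau>" unfolding A_def by auto
      moreover have "\<tau> - 1 < x" using calculation h by linarith
      ultimately show "x \<in> {\<tau> - 1<..\<tau>}" by simp
    qed
    then have "emeasure ?M (A n) \<le> emeasure ?M {\<tau> - 1<..\<tau>}" by (rule emeasure_mono) simp
    also have "\<dots> = ennreal (rc_part \<phi> \<tau> - rc_part \<phi> (\<tau> - 1))"
      by (rule emeasure_interval_measure_Ioc[OF _ rc_part_mono[OF mono z] rc_part_right_cont[OF mono z]]) simp
    finally have le: "emeasure ?M (A n) \<le> ennreal (rc_part \<phi> \<tau> - rc_part \<phi> (\<tau> - 1))" .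
    show ?thesis
    proof
      assume "emeasure ?M (A n) = \<infinity>"
      then show False using le by (simp add: top_unique)
    qed
  qed
  have inter: "(\<Inter>i. A i) = {}"
  proof (rule ccontr)
    assume "(\<Inter>i. A i) \<noteq> {}"
    then obtain x where x: "\<And>i. x \<in> A i" by auto
    then have "x < \<tau>" unfolding A_def by auto
    then obtain n where n: "inverse (real (Suc n)) < \<tau> - x" using reals_Archimedean[of "\<tau> - x"] by (meson diff_gt_0_iff_gt)
    have "x \<in> {\<tau> - 1 / real (Suc n)<..<\<tau>}" using x[of n] unfolding A_def .
    then have "\<tau> - 1 / real (Suc n) < x" by (simp only: greaterThanLessThan_iff)
    then show False using n unfolding inverse_eq_divide by linarith
  qed
  have "(\<lambda>i. emeasure ?M (A i)) \<longlonglongrightarrow> 0"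
    using Lim_emeasure_decseq[OF rng dec fin] inter by simp
  then have "eventually (\<lambda>i. emeasure ?M (A i) < ennreal \<eta>) sequentially"
    using eta by (intro order_tendstoD(2)) auto
  then obtain n where n: "emeasure ?M (A n) < ennreal \<eta>"
    by (auto simp: eventually_sequentially)
  define b1 where "b1 = \<tau> - 1 / real (Suc n)"
  have b1: "b1 < \<tau>" unfolding b1_def by simp
  have sm: "djump \<phi> summable_on {0..<\<tau>}" using djump_summable[OF mono] by simp
  obtain G where G: "finite G" "G \<subseteq> {0..<\<tau>}"
    "dist (sum (djump \<phi>) G) (infsum (djump \<phi>) {0..<\<tau>}) \<le> \<eta>/2"
    using infsum_finite_approximation[OF sm, of "\<eta>/2"] eta by auto
  define b2 where "b2 = Max (insert 0 G)"
  have b2: "b2 < \<tau>" unfolding b2_def using G tau by (subst Max_less_iff) auto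
  have b2G: "\<And>g. g \<in> G \<Longrightarrow> g \<le> b2" unfolding b2_def using G by auto
  have b20: "0 \<le> b2" unfolding b2_def using G by auto
  define b where "b = max b1 b2"
  show ?thesis
  proof (intro exI[of _ b] conjI allI impI)
    show "0 \<le> b" "b < \<tau>" using b1 b2 b20 unfolding b_def by auto
    fix a assume a: "b < a" "a \<le> \<tau>"
    have "b1 < a" using a unfolding b_def by simp
    have "{a<..<\<tau>} \<subseteq> A n"
    proof
      fix x assume "x \<in> {a<..<\<tau>}"
      then have "a < x" "x < \<tau>" by auto
      then have "b1 < x" "x < \<tau>" using \<open>b1 < a\<close> by linarith+
      then show "x \<in> A n" unfolding A_def b1_def by (simp only: greaterThanLessThan_iff)
    qed
    then have "emeasure ?M {a<..<\<tau>} \<le> emeasure ?M (A n)" by (rule emeasure_mono) (simp add: A_def)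
    then show "emeasure ?M {a<..<\<tau>} < ennreal \<eta>" using n by auto
    have a0: "0 \<le> a" using a b20 unfolding b_def by auto
    have "b2 < a" using a unfolding b_def by simp
    then have disj: "{a..<\<tau>} \<inter> G = {}" by (auto dest!: b2G)
    have U1: "infsum (djump \<phi>) ({a..<\<tau>} \<union> G) = infsum (djump \<phi>) {a..<\<tau>} + infsum (djump \<phi>) G"
      by (rule infsum_Un_disjoint[OF djump_summable[OF mono a0] _ disj]) (use G in auto)
    have U2: "infsum (djump \<phi>) ({a..<\<tau>} \<union> G) \<le> infsum (djump \<phi>) {0..<\<tau>}"
    proof (rule infsum_mono_neutral)
      show "djump \<phi> summable_on {a..<\<tau>} \<union> G"
        by (rule summable_on_Un_disjoint[OF djump_summable[OF mono a0] _ disj]) (use G in auto)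
      show "djump \<phi> summable_on {0..<\<tau>}" by (rule sm)
    qed (use G a0 djump_nonneg[OF mono] in auto)
    have U3: "infsum (djump \<phi>) G = sum (djump \<phi>) G" using G by simp
    show "infsum (djump \<phi>) {a..<\<tau>} < \<eta>"
    proof -
      have "infsum (djump \<phi>) {0..<\<tau>} - sum (djump \<phi>) G \<le> \<eta>/2"
        using G(3) unfolding dist_real_def abs_le_iff by linarith
      with U1 U2 U3 eta show ?thesis by linarith
    qed
  qed
qed

lemma nn_zero:
  fixes f :: "real \<Rightarrow> real"
  assumes I: "(\<integral>\<^sup>+ s\<in>{0..}. ennreal (f s) \<partial>M) = 0" and B: "B \<in> sets M" "B \<subseteq> {0..}"
    and e: "e > 0" "\<forall>s\<in>B. e \<le> f s"
  shows "emeasure M B = 0"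
proof -
  have "ennreal e * emeasure M B = (\<integral>\<^sup>+ s. ennreal e * indicator B s \<partial>M)"
    using B by (simp add: nn_integral_cmult_indicator)
  also have "\<dots> \<le> (\<integral>\<^sup>+ s. ennreal (f s) * indicator {0..} s \<partial>M)"
    by (intro nn_integral_mono) (use B e in \<open>auto split: split_indicator\<close>)
  also have "\<dots> = 0" using I by simp
  finally show ?thesis using e by simp
qed

lemma reg_local_bound:
  fixes f :: "real \<Rightarrow> real"
  assumes reg: "regulated f" and t: "t \<ge> 0"
  shows "\<exists>d>0. \<exists>B. \<forall>z. z \<ge> 0 \<and> \<bar>z - t\<bar> < d \<longrightarrow> \<bar>f z\<bar> \<le> B"
proof -
  obtain R where R: "(f \<longlongrightarrow> R) (at_right t)" using reg t unfolding regulated_def by blast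
  have "eventually (\<lambda>z. dist (f z) R < 1) (at_right t)" using tendstoD[OF R] by simp
  then obtain b1 where b1: "b1 > t" "\<And>z. z > t \<Longrightarrow> z < b1 \<Longrightarrow> dist (f z) R < 1"
    by (auto simp: eventually_at_right_field)
  obtain b2 L where b2: "b2 < t" "\<And>z. z > b2 \<Longrightarrow> z < t \<Longrightarrow> t > 0 \<Longrightarrow> dist (f z) L < 1"
  proof (cases "t > 0")
    case True
    obtain L where L: "(f \<longlongrightarrow> L) (at_left t)" using reg True unfolding regulated_def by blast
    have "eventually (\<lambda>z. dist (f z) L < 1) (at_left t)" using tendstoD[OF L] by simp
    then obtain b2 where "b2 < t" "\<And>z. z > b2 \<Longrightarrow> z < t \<Longrightarrow> dist (f z) L < 1"
      by (auto simp: eventually_at_left_field)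
    then show ?thesis using that by blast
  next
    case False
    then show ?thesis using that[of "t - 1" 0] by auto
  qed
  define d where "d = min (b1 - t) (t - b2)"
  have d: "d > 0" using b1 b2 unfolding d_def by auto
  have "\<forall>z. z \<ge> 0 \<and> \<bar>z - t\<bar> < d \<longrightarrow> \<bar>f z\<bar> \<le> max (\<bar>f t\<bar>) (max (\<bar>R\<bar> + 1) (\<bar>L\<bar> + 1))"
  proof (intro allI impI)
    fix z assume z: "z \<ge> 0 \<and> \<bar>z - t\<bar> < d"
    consider "z = t" | "z > t" | "z < t" by linarith
    then show "\<bar>f z\<bar> \<le> max (\<bar>f t\<bar>) (max (\<bar>R\<bar> + 1) (\<bar>L\<bar> + 1))"
    proof cases
      case 2
      then have "dist (f z) R < 1" using b1 z unfolding d_def by auto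
      then show ?thesis unfolding dist_real_def by linarith
    next
      case 3
      then have "dist (f z) L < 1" using b2 z unfolding d_def by auto
      then show ?thesis unfolding dist_real_def by linarith
    qed auto
  qed
  then show ?thesis using d by blast
qed

lemma reg_bounded:
  fixes f :: "real \<Rightarrow> real"
  assumes reg: "regulated f"
  shows "\<exists>B. \<forall>z\<in>{0..T}. \<bar>f z\<bar> \<le> B"
proof -
  have "\<forall>t\<in>{0..T}. \<exists>d>0. \<exists>B. \<forall>z. z \<ge> 0 \<and> \<bar>z - t\<bar> < d \<longrightarrow> \<bar>f z\<bar> \<le> B"
    using reg_local_bound[OF reg] by auto
  then have "\<forall>t\<in>{0..T}. \<exists>p. fst p > 0 \<and> (\<forall>z. z \<ge> 0 \<and> \<bar>z - t\<bar> < fst p \<longrightarrow> \<bar>f z\<bar> \<le> snd p)"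
    by simp
  then obtain p where p: "\<forall>t\<in>{0..T}. fst (p t) > 0 \<and> (\<forall>z. z \<ge> 0 \<and> \<bar>z - t\<bar> < fst (p t) \<longrightarrow> \<bar>f z\<bar> \<le> snd (p t))"
    by (rule bchoice[elim_format]) blast
  define d where "d t = fst (p t)" for t
  define B where "B t = snd (p t)" for t
  have dB: "\<And>t. t \<in> {0..T} \<Longrightarrow> d t > 0"
    "\<And>t z. t \<in> {0..T} \<Longrightarrow> z \<ge> 0 \<Longrightarrow> \<bar>z - t\<bar> < d t \<Longrightarrow> \<bar>f z\<bar> \<le> B t"
    using p unfolding d_def B_def by auto
  have cov: "{0..T} \<subseteq> (\<Union>t\<in>{0..T}. ball t (d t))"
  proof
    fix z assume z: "z \<in> {0..T}"
    then have "z \<in> ball z (d z)" using dB(1) by simp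
    then show "z \<in> (\<Union>t\<in>{0..T}. ball t (d t))" using z by blast
  qed
  obtain K where K: "K \<subseteq> {0..T}" "finite K" "{0..T} \<subseteq> (\<Union>t\<in>K. ball t (d t))"
    using compactE_image[OF compact_Icc _ cov] by blast
  show ?thesis
  proof (intro exI[of _ "\<Sum>t\<in>K. \<bar>B t\<bar>"] ballI)
    fix z assume z: "z \<in> {0..T}"
    then obtain t where t: "t \<in> K" "z \<in> ball t (d t)" using K by auto
    then have "\<bar>f z\<bar> \<le> B t" using dB(2)[of t z] K z by (auto simp: dist_real_def abs_minus_commute)
    also have "\<dots> \<le> \<bar>B t\<bar>" by simp
    also have "\<dots> \<le> (\<Sum>t\<in>K. \<bar>B t\<bar>)" by (rule member_le_sum) (use t K in auto)
    finally show "\<bar>f z\<bar> \<le> (\<Sum>t\<in>K. \<bar>B t\<bar>)" .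
  qed
qed

lemma has_sum_point0:
  fixes g :: "real \<Rightarrow> real"
  assumes "(g has_sum 0) A" "\<And>s. s \<in> A \<Longrightarrow> g s \<ge> 0" "s \<in> A"
  shows "g s = 0"
  using nonneg_has_sum_le_0D[OF assms(1) _ assms(2) assms(3)] by simp

lemma rgt_ord:
  fixes f g :: "real \<Rightarrow> real"
  assumes "(f \<longlongrightarrow> a) (at_right s)" "(g \<longlongrightarrow> b) (at_right s)"
    "eventually (\<lambda>z. f z \<le> g z) (at_right s)"
  shows "a \<le> b"
  by (rule tendsto_le[OF _ assms(2) assms(1) assms(3)]) simp

lemma rgt_bound:
  fixes f g :: "real \<Rightarrow> real"
  assumes "(f \<longlongrightarrow> a) (at_right s)" "(g \<longlongrightarrow> b) (at_right s)" "0 \<le> s" "s < T"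
    "\<forall>z\<in>{0..<T}. \<bar>f z - g z\<bar> \<le> d"
  shows "\<bar>a - b\<bar> \<le> d"
proof (rule tendsto_upperbound)
  show "((\<lambda>z. \<bar>f z - g z\<bar>) \<longlongrightarrow> \<bar>a - b\<bar>) (at_right s)"
    using assms by (intro tendsto_intros)
  show "eventually (\<lambda>z. \<bar>f z - g z\<bar> \<le> d) (at_right s)"
    using assms by (intro eventually_at_rightI[of s T]) auto
qed simp

lemma incr_small:
  fixes \<phi> :: "real \<Rightarrow> real"
  assumes mono: "mono_on {0..} \<phi>" and z: "\<phi> 0 = 0"
    and a: "0 \<le> a" "a \<le> \<tau>" "\<tau> \<le> t"
    and m1: "emeasure (interval_measure (rc_part \<phi>)) {a<..<\<tau>} < ennreal \<eta>"
    and m2: "emeasure (interval_measure (rc_part \<phi>)) B = 0"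
    and m3: "emeasure (interval_measure (rc_part \<phi>)) {t} = 0"
    and sub: "{a<..t} \<subseteq> {a<..<\<tau>} \<union> B \<union> {t}" and Bs: "B \<in> sets borel"
    and s1: "infsum (djump \<phi>) {a..<\<tau>} < \<eta>"
    and dj0: "\<forall>s\<in>{\<tau>..<t}. djump \<phi> s = 0"
  shows "\<phi> t - \<phi> a < 2 * \<eta>"
proof -
  let ?M = "interval_measure (rc_part \<phi>)"
  have "ennreal (\<phi> t - \<phi> a - infsum (djump \<phi>) {a..<t}) = emeasure ?M {a<..t}"
    using rc_measure_Ioc[OF mono z a(1), of t] a by simp
  also have "\<dots> \<le> emeasure ?M ({a<..<\<tau>} \<union> B \<union> {t})"
    by (rule emeasure_mono[OF sub]) (use Bs in simp)
  also have "\<dots> \<le> emeasure ?M ({a<..<\<tau>} \<union> B) + emeasure ?M {t}"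
    by (rule emeasure_subadditive) (use Bs in auto)
  also have "\<dots> \<le> emeasure ?M {a<..<\<tau>} + emeasure ?M B + emeasure ?M {t}"
    by (intro add_right_mono emeasure_subadditive) (use Bs in auto)
  also have "\<dots> < ennreal \<eta>" using m1 m2 m3 by simp
  finally have lt: "ennreal (\<phi> t - \<phi> a - infsum (djump \<phi>) {a..<t}) < ennreal \<eta>" .
  have "\<phi> t - \<phi> a - infsum (djump \<phi>) {a..<t} < \<eta>"
  proof (cases "\<phi> t - \<phi> a - infsum (djump \<phi>) {a..<t} \<ge> 0")
    case True
    then show ?thesis using lt by (simp add: ennreal_less_iff)
  next
    case False
    then have "ennreal (\<phi> t - \<phi> a - infsum (djump \<phi>) {a..<t}) = 0" by (intro ennreal_neg) simp
    then have "0 < ennreal \<eta>" using lt by simp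
    then have "0 < \<eta>" by simp
    then show ?thesis using False by linarith
  qed
  moreover have "infsum (djump \<phi>) {a..<t} = infsum (djump \<phi>) {a..<\<tau>}"
    by (rule infsum_cong_neutral) (use dj0 a in auto)
  ultimately show ?thesis using s1 by linarith
qed

lemma main_bound:
  fixes y y' l l' u u' x x' k k' :: "real \<Rightarrow> real" and T dy dl du t :: real
  assumes ry: "regulated y" and ry': "regulated y'" and rl: "regulated l" and rl': "regulated l'"
    and ru: "regulated u" and ru': "regulated u'"
    and sol: "is_RP_solution l u y x k" and sol': "is_RP_solution l' u' y' x' k'"
    and hy: "\<forall>s\<in>{0..<T}. \<bar>y s - y' s\<bar> \<le> dy"
    and bl: "\<forall>s\<in>{0..<T}. \<bar>l s - l' s\<bar> \<le> dl"
    and bu: "\<forall>s\<in>{0..<T}. \<bar>u s - u' s\<bar> \<le> du"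
    and t: "0 \<le> t" "t < T"
  shows "k t - k' t \<le> dy + dl + du"
proof (rule ccontr)
  assume "\<not> k t - k' t \<le> dy + dl + du"
  then have Dt0: "k t - k' t > dy + dl + du" by simp
  from sol[unfolded is_RP_solution_def] obtain p1 p2 where
    rx: "regulated x" and
    xe: "\<forall>t\<ge>0. x t = y t + k t" and ke: "\<forall>t\<ge>0. k t = p1 t - p2 t" and
    lxu: "\<forall>t\<ge>0. l t \<le> x t \<and> x t \<le> u t" and
    m1: "mono_on {0..} p1" and m2: "mono_on {0..} p2" and z1: "p1 0 = 0" and z2: "p2 0 = 0" and
    I1: "(\<integral>\<^sup>+ s\<in>{0..}. ennreal (min (x s - l s) (rgt x s - rgt l s))
            \<partial>interval_measure (rc_part p1)) = 0" and
    H: "\<forall>t\<ge>0.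
           ((\<lambda>s. (rgt x s - rgt l s) * djump p1 s) has_sum 0) {0..t} \<and>
           ((\<lambda>s. (u s - x s) * djump p1 s) has_sum 0) {0..t} \<and>
           ((\<lambda>s. (rgt u s - rgt x s) * djump p2 s) has_sum 0) {0..t} \<and>
           ((\<lambda>s. (x s - l s) * djump p2 s) has_sum 0) {0..t}"
    by blast
  from sol'[unfolded is_RP_solution_def] obtain q1 q2 where
    rx': "regulated x'" and
    xe': "\<forall>t\<ge>0. x' t = y' t + k' t" and ke': "\<forall>t\<ge>0. k' t = q1 t - q2 t" and
    lxu': "\<forall>t\<ge>0. l' t \<le> x' t \<and> x' t \<le> u' t" and
    n1: "mono_on {0..} q1" and n2: "mono_on {0..} q2" and w1: "q1 0 = 0" and w2: "q2 0 = 0" and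
    J2: "(\<integral>\<^sup>+ s\<in>{0..}. ennreal (min (u' s - x' s) (rgt u' s - rgt x' s))
            \<partial>interval_measure (rc_part q2)) = 0" and
    H': "\<forall>t\<ge>0.
           ((\<lambda>s. (rgt x' s - rgt l' s) * djump q1 s) has_sum 0) {0..t} \<and>
           ((\<lambda>s. (u' s - x' s) * djump q1 s) has_sum 0) {0..t} \<and>
           ((\<lambda>s. (rgt u' s - rgt x' s) * djump q2 s) has_sum 0) {0..t} \<and>
           ((\<lambda>s. (x' s - l' s) * djump q2 s) has_sum 0) {0..t}"
    by blast
  define D where "D s = k s - k' s" for s
  have Dform: "D s = (p1 s - p2 s) - (q1 s - q2 s)" if "s \<ge> 0" for s
    using ke ke' that unfolding D_def by simp
  have T0: "0 \<in> {0..<T}" using t by simp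
  have dy0: "0 \<le> dy" using hy T0 by force
  have dl0: "0 \<le> dl" using bl T0 by force
  have du0: "0 \<le> du" using bu T0 by force
  define c0 where "c0 = dy + dl + du"
  define \<epsilon> where "\<epsilon> = (D t - c0) / 4"
  define c where "c = c0 + 2 * \<epsilon>"
  have eps: "\<epsilon> > 0" using Dt0 unfolding \<epsilon>_def c0_def D_def by simp
  have Dtc: "D t > c" using Dt0 unfolding c_def \<epsilon>_def c0_def D_def by (simp add: field_simps)
  have c0pos: "c0 \<ge> 0" using dy0 dl0 du0 unfolding c0_def by simp
  have Ry: "(y \<longlongrightarrow> rgt y s) (at_right s)" and Ry': "(y' \<longlongrightarrow> rgt y' s) (at_right s)"
    and Rl: "(l \<longlongrightarrow> rgt l s) (at_right s)" and Rl': "(l' \<longlongrightarrow> rgt l' s) (at_right s)"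
    and Ru: "(u \<longlongrightarrow> rgt u s) (at_right s)" and Ru': "(u' \<longlongrightarrow> rgt u' s) (at_right s)"
    and Rx: "(x \<longlongrightarrow> rgt x s) (at_right s)" and Rx': "(x' \<longlongrightarrow> rgt x' s) (at_right s)"
    if "s \<ge> 0" for s
    using reg_rgt[OF ry that] reg_rgt[OF ry' that] reg_rgt[OF rl that] reg_rgt[OF rl' that]
      reg_rgt[OF ru that] reg_rgt[OF ru' that] reg_rgt[OF rx that] reg_rgt[OF rx' that] by auto
  have evpos: "eventually (\<lambda>z. z > s) (at_right s)" for s :: real
    by (intro eventually_at_rightI[of s "s+1"]) auto
  have rgtx: "rgt x s = rgt y s + rgt p1 s - rgt p2 s" if "s \<ge> 0" for s
  proof -
    have "((\<lambda>z. y z + p1 z - p2 z) \<longlongrightarrow> rgt y s + rgt p1 s - rgt p2 s) (at_right s)"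
      using Ry[OF that] mono_rgt(1)[OF m1 that] mono_rgt(1)[OF m2 that] by (intro tendsto_intros)
    moreover have "eventually (\<lambda>z. y z + p1 z - p2 z = x z) (at_right s)"
      using evpos[of s] by eventually_elim (use that xe ke in auto)
    ultimately have "(x \<longlongrightarrow> rgt y s + rgt p1 s - rgt p2 s) (at_right s)"
      by (rule Lim_transform_eventually)
    then show ?thesis using tendsto_unique[OF _ Rx[OF that]] by simp
  qed
  have rgtx': "rgt x' s = rgt y' s + rgt q1 s - rgt q2 s" if "s \<ge> 0" for s
  proof -
    have "((\<lambda>z. y' z + q1 z - q2 z) \<longlongrightarrow> rgt y' s + rgt q1 s - rgt q2 s) (at_right s)"
      using Ry'[OF that] mono_rgt(1)[OF n1 that] mono_rgt(1)[OF n2 that] by (intro tendsto_intros)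
    moreover have "eventually (\<lambda>z. y' z + q1 z - q2 z = x' z) (at_right s)"
      using evpos[of s] by eventually_elim (use that xe' ke' in auto)
    ultimately have "(x' \<longlongrightarrow> rgt y' s + rgt q1 s - rgt q2 s) (at_right s)"
      by (rule Lim_transform_eventually)
    then show ?thesis using tendsto_unique[OF _ Rx'[OF that]] by simp
  qed
  have ordx: "rgt l s \<le> rgt x s" "rgt x s \<le> rgt u s" "rgt l' s \<le> rgt x' s" "rgt x' s \<le> rgt u' s"
    if "s \<ge> 0" for s
  proof -
    have e1: "eventually (\<lambda>z. l z \<le> x z \<and> x z \<le> u z \<and> l' z \<le> x' z \<and> x' z \<le> u' z) (at_right s)"
      using evpos[of s] by eventually_elim (use that lxu lxu' in auto)
    show "rgt l s \<le> rgt x s" by (rule rgt_ord[OF Rl[OF that] Rx[OF that]]) (use e1 in \<open>eventually_elim, auto\<close>)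
    show "rgt x s \<le> rgt u s" by (rule rgt_ord[OF Rx[OF that] Ru[OF that]]) (use e1 in \<open>eventually_elim, auto\<close>)
    show "rgt l' s \<le> rgt x' s" by (rule rgt_ord[OF Rl'[OF that] Rx'[OF that]]) (use e1 in \<open>eventually_elim, auto\<close>)
    show "rgt x' s \<le> rgt u' s" by (rule rgt_ord[OF Rx'[OF that] Ru'[OF that]]) (use e1 in \<open>eventually_elim, auto\<close>)
  qed
  have bnd: "\<bar>rgt y s - rgt y' s\<bar> \<le> dy" "\<bar>rgt l s - rgt l' s\<bar> \<le> dl" "\<bar>rgt u s - rgt u' s\<bar> \<le> du"
    if "0 \<le> s" "s < T" for s
    using rgt_bound[OF Ry[OF that(1)] Ry'[OF that(1)] that hy]
      rgt_bound[OF Rl[OF that(1)] Rl'[OF that(1)] that bl]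
      rgt_bound[OF Ru[OF that(1)] Ru'[OF that(1)] that bu] by auto
  have PA: "x s - l s \<ge> 2 * \<epsilon> \<and> u' s - x' s \<ge> 2 * \<epsilon>" if "0 \<le> s" "s < T" "D s > c" for s
  proof -
    have "x s - x' s = y s - y' s + D s" using xe xe' that unfolding D_def by simp
    moreover have "\<bar>y s - y' s\<bar> \<le> dy" "\<bar>l s - l' s\<bar> \<le> dl" "\<bar>u s - u' s\<bar> \<le> du"
      using hy bl bu that by auto
    moreover have "l' s \<le> x' s" "x s \<le> u s" using lxu lxu' that by auto
    ultimately show ?thesis using that unfolding c_def c0_def abs_le_iff by linarith
  qed
  have PB: "rgt x s - rgt l s \<ge> 2 * \<epsilon> \<and> rgt u' s - rgt x' s \<ge> 2 * \<epsilon>"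
    if "0 \<le> s" "s < T" "eventually (\<lambda>z. D z > c) (at_right s)" for s
  proof -
    have ev: "eventually (\<lambda>z. x z - l z \<ge> 2 * \<epsilon> \<and> u' z - x' z \<ge> 2 * \<epsilon>) (at_right s)"
    proof -
      have "eventually (\<lambda>z. z > s \<and> z < T) (at_right s)"
        using that by (intro eventually_at_rightI[of s T]) auto
      then show ?thesis using that(3) by eventually_elim (use PA that in auto)
    qed
    have "rgt x s - rgt l s \<ge> 2 * \<epsilon>"
      by (rule tendsto_lowerbound[OF tendsto_diff[OF Rx[OF that(1)] Rl[OF that(1)]]])
         (use ev in \<open>eventually_elim, auto\<close>)
    moreover have "rgt u' s - rgt x' s \<ge> 2 * \<epsilon>"
      by (rule tendsto_lowerbound[OF tendsto_diff[OF Ru'[OF that(1)] Rx'[OF that(1)]]])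
         (use ev in \<open>eventually_elim, auto\<close>)
    ultimately show ?thesis by simp
  qed
  define S where "S = {s\<in>{0..t}. D s \<le> c}"
  have D0: "D 0 = 0" using Dform[of 0] z1 z2 w1 w2 by simp
  have cpos: "c > 0" using c0pos eps unfolding c_def by simp
  have S0: "0 \<in> S" unfolding S_def using D0 cpos t by simp
  have Sne: "S \<noteq> {}" using S0 by auto
  have Sbdd: "bdd_above S" unfolding S_def bdd_above_def by auto
  define \<tau> where "\<tau> = Sup S"
  have tau0: "0 \<le> \<tau>" unfolding \<tau>_def using cSup_upper[OF S0 Sbdd] .
  have taut: "\<tau> \<le> t" unfolding \<tau>_def by (rule cSup_least[OF Sne]) (auto simp: S_def)
  have notS: "D s > c" if "\<tau> < s" "s \<le> t" for s
  proof -
    have "s \<notin> S" using cSup_upper[OF _ Sbdd, of s] that unfolding \<tau>_def by auto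
    then show ?thesis using that tau0 unfolding S_def by auto
  qed
  have evR: "eventually (\<lambda>z. D z > c) (at_right s)" if "\<tau> \<le> s" "s < t" for s
    by (intro eventually_at_rightI[of s t]) (use that notS in auto)
  have djz: "djump p1 s = 0 \<and> djump q2 s = 0" if "\<tau> \<le> s" "s < t" for s
  proof -
    have s0: "0 \<le> s" "s < T" using that tau0 t by auto
    have pb: "rgt x s - rgt l s \<ge> 2 * \<epsilon>" "rgt u' s - rgt x' s \<ge> 2 * \<epsilon>"
      using PB[OF s0 evR[OF that]] by auto
    have "(rgt x s - rgt l s) * djump p1 s = 0"
    proof (rule has_sum_point0[of "\<lambda>s. (rgt x s - rgt l s) * djump p1 s" "{0..t}" s])
      show "((\<lambda>s. (rgt x s - rgt l s) * djump p1 s) has_sum 0) {0..t}" using H t by auto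
      show "\<And>s. s \<in> {0..t} \<Longrightarrow> 0 \<le> (rgt x s - rgt l s) * djump p1 s"
        using ordx djump_nonneg[OF m1] by auto
    qed (use s0 that in auto)
    moreover have "(rgt u' s - rgt x' s) * djump q2 s = 0"
    proof (rule has_sum_point0[of "\<lambda>s. (rgt u' s - rgt x' s) * djump q2 s" "{0..t}" s])
      show "((\<lambda>s. (rgt u' s - rgt x' s) * djump q2 s) has_sum 0) {0..t}" using H' t by auto
      show "\<And>s. s \<in> {0..t} \<Longrightarrow> 0 \<le> (rgt u' s - rgt x' s) * djump q2 s"
        using ordx djump_nonneg[OF n2] by auto
    qed (use s0 that in auto)
    ultimately show ?thesis using pb eps by auto
  qed
  have PAt: "x t - l t \<ge> 2 * \<epsilon>" "u' t - x' t \<ge> 2 * \<epsilon>" using PA[OF t Dtc] by auto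
  have KC: "rgt x t - rgt x' t > dl + du"
  proof (rule ccontr)
    assume "\<not> rgt x t - rgt x' t > dl + du"
    then have le: "rgt x t - rgt x' t \<le> dl + du" by simp
    have "djump p2 t = 0"
    proof -
      have "(x t - l t) * djump p2 t = 0"
      proof (rule has_sum_point0[of "\<lambda>s. (x s - l s) * djump p2 s" "{0..t}" t])
        show "((\<lambda>s. (x s - l s) * djump p2 s) has_sum 0) {0..t}" using H t by auto
        show "\<And>s. s \<in> {0..t} \<Longrightarrow> 0 \<le> (x s - l s) * djump p2 s"
          using lxu djump_nonneg[OF m2] by auto
      qed (use t in auto)
      then show ?thesis using PAt eps by auto
    qed
    moreover have "djump q1 t = 0"
    proof -
      have "(u' t - x' t) * djump q1 t = 0"
      proof (rule has_sum_point0[of "\<lambda>s. (u' s - x' s) * djump q1 s" "{0..t}" t])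
        show "((\<lambda>s. (u' s - x' s) * djump q1 s) has_sum 0) {0..t}" using H' t by auto
        show "\<And>s. s \<in> {0..t} \<Longrightarrow> 0 \<le> (u' s - x' s) * djump q1 s"
          using lxu' djump_nonneg[OF n1] by auto
      qed (use t in auto)
      then show ?thesis using PAt eps by auto
    qed
    moreover have "djump p1 t \<ge> 0" "djump q2 t \<ge> 0"
      using djump_nonneg[OF m1 t(1)] djump_nonneg[OF n2 t(1)] by auto
    moreover have "D t = (p1 t - p2 t) - (q1 t - q2 t)" using Dform t by simp
    moreover have "\<bar>rgt y t - rgt y' t\<bar> \<le> dy" using bnd t by auto
    ultimately show False
      using le rgtx[OF t(1)] rgtx'[OF t(1)] Dtc unfolding djump_def c_def c0_def abs_le_iff
      using eps by linarith
  qed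
  have mt1: "emeasure (interval_measure (rc_part p1)) {t} = 0"
  proof -
    have "rgt x t - rgt l t > 0"
    proof (rule ccontr)
      assume "\<not> rgt x t - rgt l t > 0"
      then show False using KC ordx(3)[OF t(1)] bnd[OF t] du0 unfolding abs_le_iff by linarith
    qed
    then show ?thesis
      by (intro nn_zero[OF I1, of _ "min (2 * \<epsilon>) (rgt x t - rgt l t)"]) (use PAt eps t in auto)
  qed
  have mt2: "emeasure (interval_measure (rc_part q2)) {t} = 0"
  proof -
    have "rgt u' t - rgt x' t > 0"
    proof (rule ccontr)
      assume "\<not> rgt u' t - rgt x' t > 0"
      then show False using KC ordx(2)[OF t(1)] bnd[OF t] dl0 unfolding abs_le_iff by linarith
    qed
    then show ?thesis
      by (intro nn_zero[OF J2, of _ "min (2 * \<epsilon>) (rgt u' t - rgt x' t)"]) (use PAt eps t in auto)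
  qed
  define B where "B = (if \<tau> \<in> S then {\<tau><..<t} else {\<tau>..<t})"
  have Bs: "B \<in> sets borel" unfolding B_def by auto
  have Bsub: "B \<subseteq> {0..}" unfolding B_def using tau0 by auto
  have Bprop: "\<tau> \<le> s \<and> s < t \<and> D s > c" if "s \<in> B" for s
  proof (cases "s = \<tau>")
    case True
    then have "\<tau> \<notin> S" "\<tau> < t" using that unfolding B_def by (auto split: if_splits)
    then show ?thesis using True tau0 unfolding S_def by auto
  next
    case False
    then have "\<tau> < s" "s < t" using that unfolding B_def by (auto split: if_splits)
    then show ?thesis using notS by auto
  qed
  have Bint: "2 * \<epsilon> \<le> min (x s - l s) (rgt x s - rgt l s) \<and> 2 * \<epsilon> \<le> min (u' s - x' s) (rgt u' s - rgt x' s)"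
    if "s \<in> B" for s
  proof -
    have s: "\<tau> \<le> s" "s < t" "D s > c" using Bprop[OF that] by auto
    have s0: "0 \<le> s" "s < T" using s tau0 t by auto
    show ?thesis using PA[OF s0 s(3)] PB[OF s0 evR[OF s(1,2)]] by auto
  qed
  have mB1: "emeasure (interval_measure (rc_part p1)) B = 0"
    by (rule nn_zero[OF I1 _ Bsub, of "2 * \<epsilon>"]) (use Bs eps Bint in auto)
  have mB2: "emeasure (interval_measure (rc_part q2)) B = 0"
    by (rule nn_zero[OF J2 _ Bsub, of "2 * \<epsilon>"]) (use Bs eps Bint in auto)
  define \<eta> where "\<eta> = (D t - c) / 8"
  have eta: "\<eta> > 0" using Dtc unfolding \<eta>_def by simp
  obtain a where a: "a \<in> S" "a \<le> \<tau>" "a < \<tau> \<longrightarrow> \<tau> \<notin> S"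
    "emeasure (interval_measure (rc_part p1)) {a<..<\<tau>} < ennreal \<eta>"
    "emeasure (interval_measure (rc_part q2)) {a<..<\<tau>} < ennreal \<eta>"
    "infsum (djump p1) {a..<\<tau>} < \<eta>" "infsum (djump q2) {a..<\<tau>} < \<eta>"
  proof (cases "\<tau> \<in> S")
    case True
    then show ?thesis using that[of \<tau>] eta by simp
  next
    case False
    then have tpos: "\<tau> > 0" using S0 tau0 by (cases "\<tau> = 0") auto
    obtain b1 where b1: "0 \<le> b1" "b1 < \<tau>" "\<forall>a. b1 < a \<longrightarrow> a \<le> \<tau> \<longrightarrow>
           emeasure (interval_measure (rc_part p1)) {a<..<\<tau>} < ennreal \<eta> \<and>
           infsum (djump p1) {a..<\<tau>} < \<eta>"
      using threshold[OF m1 z1 tpos eta] by blast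
    obtain b2 where b2: "0 \<le> b2" "b2 < \<tau>" "\<forall>a. b2 < a \<longrightarrow> a \<le> \<tau> \<longrightarrow>
           emeasure (interval_measure (rc_part q2)) {a<..<\<tau>} < ennreal \<eta> \<and>
           infsum (djump q2) {a..<\<tau>} < \<eta>"
      using threshold[OF n2 w2 tpos eta] by blast
    have "max b1 b2 < Sup S" using b1 b2 unfolding \<tau>_def by simp
    then obtain a where aS: "a \<in> S" "max b1 b2 < a" using less_cSup_iff[OF Sne Sbdd] by blast
    have "a \<le> \<tau>" unfolding \<tau>_def using cSup_upper[OF aS(1) Sbdd] .
    then show ?thesis using that[of a] aS b1 b2 False by auto
  qed
  have a0: "0 \<le> a" "a \<le> t" using a(1) unfolding S_def by auto
  have Da: "D a \<le> c" using a(1) unfolding S_def by auto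
  have sub: "{a<..t} \<subseteq> {a<..<\<tau>} \<union> B \<union> {t}"
  proof
    fix s assume s: "s \<in> {a<..t}"
    show "s \<in> {a<..<\<tau>} \<union> B \<union> {t}"
    proof (cases "s < \<tau> \<or> s = t")
      case True then show ?thesis using s by auto
    next
      case False
      then have "\<tau> \<le> s" "s < t" using s by auto
      moreover have "s = \<tau> \<longrightarrow> \<tau> \<notin> S" using a(3) s by auto
      ultimately show ?thesis unfolding B_def by auto
    qed
  qed
  have inc1: "p1 t - p1 a < 2 * \<eta>"
    by (rule incr_small[OF m1 z1 a0(1) a(2) taut a(4) mB1 mt1 sub Bs a(6)]) (use djz in auto)
  have inc2: "q2 t - q2 a < 2 * \<eta>"
    by (rule incr_small[OF n2 w2 a0(1) a(2) taut a(5) mB2 mt2 sub Bs a(7)]) (use djz in auto)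
  have "p2 a \<le> p2 t" "q1 a \<le> q1 t" using m2 n1 a0 unfolding mono_on_def by auto
  moreover have "D t = (p1 t - p2 t) - (q1 t - q2 t)" "D a = (p1 a - p2 a) - (q1 a - q2 a)"
    using Dform t a0 by auto
  moreover have "8 * \<eta> = D t - c" unfolding \<eta>_def by simp
  ultimately show False using inc1 inc2 Da Dtc by linarith
qed

lemma sup_ok:
  fixes f g :: "real \<Rightarrow> real"
  assumes "regulated f" "regulated g"
  shows "\<forall>s\<in>{0..<T}. \<bar>f s - g s\<bar> \<le> supnorm_lt T (\<lambda>s. f s - g s)"
proof
  fix s assume s: "s \<in> {0..<T}"
  obtain B1 where B1: "\<forall>z\<in>{0..T}. \<bar>f z\<bar> \<le> B1" using reg_bounded[OF assms(1)] by blast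
  obtain B2 where B2: "\<forall>z\<in>{0..T}. \<bar>g z\<bar> \<le> B2" using reg_bounded[OF assms(2)] by blast
  have "bdd_above ((\<lambda>s. \<bar>f s - g s\<bar>) ` {0..<T})"
  proof (rule bdd_aboveI2)
    fix z assume "z \<in> {0..<T}"
    then have "\<bar>f z\<bar> \<le> B1" "\<bar>g z\<bar> \<le> B2" using B1 B2 by auto
    then show "\<bar>f z - g z\<bar> \<le> B1 + B2" by linarith
  qed
  then show "\<bar>f s - g s\<bar> \<le> supnorm_lt T (\<lambda>s. f s - g s)"
    unfolding supnorm_lt_def using s by (intro cSUP_upper) auto
qed

theorem proposition2:
  fixes y y' l l' u u' x x' k k' :: "real \<Rightarrow> real" and T :: real
  assumes "regulated y" "regulated y'" "regulated l" "regulated l'"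
    "regulated u" "regulated u'"
    and "\<forall>t\<ge>0. l t \<le> u t" and "\<forall>t\<ge>0. l' t \<le> u' t"
    and "l 0 \<le> y 0" "y 0 \<le> u 0" and "l' 0 \<le> y' 0" "y' 0 \<le> u' 0"
    and "\<forall>t\<ge>0. (INF s\<in>{0..t}. u s - l s) > 0"
    and "\<forall>t\<ge>0. (INF s\<in>{0..t}. u' s - l' s) > 0"
    and "is_RP_solution l u y x k"
    and "is_RP_solution l' u' y' x' k'"
    and "T > 0"
  shows "supnorm_lt T (\<lambda>s. k s - k' s) \<le>
           2 * (supnorm_lt T (\<lambda>s. y s - y' s) + supnorm_lt T (\<lambda>s. l s - l' s)
                + supnorm_lt T (\<lambda>s. u s - u' s)) \<and>
         supnorm_lt T (\<lambda>s. x s - x' s) \<le>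
           3 * (supnorm_lt T (\<lambda>s. y s - y' s) + supnorm_lt T (\<lambda>s. l s - l' s)
                + supnorm_lt T (\<lambda>s. u s - u' s))"
proof -
  define dy where "dy = supnorm_lt T (\<lambda>s. y s - y' s)"
  define dl where "dl = supnorm_lt T (\<lambda>s. l s - l' s)"
  define du where "du = supnorm_lt T (\<lambda>s. u s - u' s)"
  have hy: "\<forall>s\<in>{0..<T}. \<bar>y s - y' s\<bar> \<le> dy" unfolding dy_def by (rule sup_ok) (use assms in auto)
  have hl: "\<forall>s\<in>{0..<T}. \<bar>l s - l' s\<bar> \<le> dl" unfolding dl_def by (rule sup_ok) (use assms in auto)
  have hu: "\<forall>s\<in>{0..<T}. \<bar>u s - u' s\<bar> \<le> du" unfolding du_def by (rule sup_ok) (use assms in auto)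
  have hy': "\<forall>s\<in>{0..<T}. \<bar>y' s - y s\<bar> \<le> dy" using hy by (simp add: abs_minus_commute)
  have hl': "\<forall>s\<in>{0..<T}. \<bar>l' s - l s\<bar> \<le> dl" using hl by (simp add: abs_minus_commute)
  have hu': "\<forall>s\<in>{0..<T}. \<bar>u' s - u s\<bar> \<le> du" using hu by (simp add: abs_minus_commute)
  have T0: "0 \<in> {0..<T}" using assms by simp
  have nn: "0 \<le> dy" "0 \<le> dl" "0 \<le> du" using hy hl hu T0 by (meson abs_ge_zero order_trans)+
  have kb: "\<bar>k s - k' s\<bar> \<le> dy + dl + du" if "s \<in> {0..<T}" for s
  proof -
    have "k s - k' s \<le> dy + dl + du"
      by (rule main_bound[OF assms(1-6) assms(15) assms(16) hy hl hu]) (use that in auto)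
    moreover have "k' s - k s \<le> dy + dl + du"
      by (rule main_bound[OF assms(2) assms(1) assms(4) assms(3) assms(6) assms(5) assms(16) assms(15)
            hy' hl' hu']) (use that in auto)
    ultimately show ?thesis by linarith
  qed
  have xe: "x s - x' s = (y s - y' s) + (k s - k' s)" if "s \<ge> 0" for s
    using assms(15,16) that unfolding is_RP_solution_def by auto
  have ne: "{0..<T} \<noteq> {}" using T0 by auto
  have "supnorm_lt T (\<lambda>s. k s - k' s) \<le> dy + dl + du"
    unfolding supnorm_lt_def by (rule cSUP_least[OF ne]) (use kb in auto)
  moreover have "supnorm_lt T (\<lambda>s. x s - x' s) \<le> dy + (dy + dl + du)"
    unfolding supnorm_lt_def
  proof (rule cSUP_least[OF ne])
    fix s assume s: "s \<in> {0..<T}"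
    have "\<bar>x s - x' s\<bar> \<le> \<bar>y s - y' s\<bar> + \<bar>k s - k' s\<bar>" using xe[of s] s by simp
    then show "\<bar>x s - x' s\<bar> \<le> dy + (dy + dl + du)" using kb[OF s] hy s by fastforce
  qed
  ultimately have r1: "supnorm_lt T (\<lambda>s. k s - k' s) \<le> 2 * (dy + dl + du)"
    and r2: "supnorm_lt T (\<lambda>s. x s - x' s) \<le> 3 * (dy + dl + du)" using nn by (auto intro: order_trans)
  show ?thesis using r1 r2 unfolding dy_def dl_def du_def by (rule conjI)
qed

end
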